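(* Let $f_1,\dots,f_n:\mathbb{R}^p\to\mathbb{R}$ be continuously differentiable, let $g=\frac1n\sum_if_i\in\mathcal S(m,L)$ with $m>0$ and minimizer $x^*$, and let $i_k$ be sampled IID uniformly from $\{1,\dots,n\}$. Consider Finito with stepsize $\alpha$ initialized from arbitrary $x_i^0,y_i^0\in\mathbb{R}^p$, and define $v^k=\frac1n\sum_{i=1}^nx_i^k-\alpha\sum_{i=1}^ny_i^k$. 1. If every $f_i\in\mathcal F(m,L)$ and $n\ge\sqrt{50L/m}$, then Finito with $\alpha=\frac1{5L}$ satisfies $\mathbb{E}\left[\frac m{10L}\sum_i\|x_i^k-x^*\|^2+\|v^k-x^*\|^2\right]\le\left(1-\min\left\{\frac1{2n},\frac m{20L}\right\}\right)^kR^0$, where $R^0=\frac m{10L}\sum_i\|x_i^0-x^*\|^2+\frac1{5L^2}\sum_i\|y_i^0-\nabla f_i(x^* )\|^2+\|v^0-x^*\|^2$. 2. If every $f_i\in\mathcal F(0,L)$ and $n\ge\sqrt{64L/m}$, then Finito with $\alpha=\frac1{8L}$ satisfies $\mathbb{E}\left[\frac m{16L}\sum_i\|x_i^k-x^*\|^2+\|v^k-x^*\|^2\right]\le\left(1-\min\left\{\frac1{3n},\frac{5m}{176L}\right\}\right)^kR^0$, where $R^0=\frac m{16L}\sum_i\|x_i^0-x^*\|^2+\frac1{16L^2}\sum_i\|y_i^0-\nabla f_i(x^* )\|^2+\|v^0-x^*\|^2$. 3. If every $f_i$ is $L$-smooth and $n\ge\frac{48L^2}{m^2}$, then Finito with $\alpha=\frac1{2nm}$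 satisfies $\mathbb{E}\left[\frac3{8n}\sum_i\|x_i^k-x^*\|^2+\|v^k-x^*\|^2\right]\le\left(1-\frac1{3n}\right)^kR^0$, where $R^0=\frac3{8n}\sum_i\|x_i^0-x^*\|^2+\frac1{n^2m^2}\sum_i\|y_i^0-\nabla f_i(x^* )\|^2+\|v^0-x^*\|^2$.
   Context: A continuously differentiable $f:\mathbb{R}^p\to\mathbb{R}$ is $L$-smooth if $\|\nabla f(x)-\nabla f(y)\|\le L\|x-y\|$; $\mathcal F(m,L)$ denotes the continuously differentiable, $L$-smooth, $m$-strongly convex functions; $\mathcal F(0,L)$ the convex $L$-smooth ones. $\mathcal S(m,L)$ is the set of continuously differentiable $g$ with a unique $x^*$ such that $\nabla g(x^* )=0$ and, for all $x$, $\begin{bmatrix}x-x^*\\\nabla g(x)\end{bmatrix}^T\begin{bmatrix}-2mLI_p&(L+m)I_p\\(L+m)I_p&-2I_p\end{bmatrix}\begin{bmatrix}x-x^*\\\nabla g(x)\end{bmatrix}\ge0$. Finito: at step $k$, $x_i^{k+1}=\frac1n\sum_{j=1}^nx_j^k-\alpha\sum_{j=1}^ny_j^k$ if $i=i_k$ and $x_i^{k+1}=x_i^k$ otherwise; then $y_i^{k+1}=\nabla f_i(x_i^{k+1})$ if $i=i_k$ and $y_i^{k+1}=y_i^k$ otherwise. Expectation is over the random indices. *)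

theory Defs
  imports "HOL-Analysis.Analysis"
begin

definition C1_grad :: "('a::euclidean_space \<Rightarrow> real) \<Rightarrow> ('a \<Rightarrow> 'a) \<Rightarrow> bool" where
  "C1_grad f G \<longleftrightarrow> (\<forall>x. GDERIV f x :> G x) \<and> continuous_on UNIV G"

definition L_smooth :: "real \<Rightarrow> ('a::euclidean_space \<Rightarrow> real) \<Rightarrow> ('a \<Rightarrow> 'a) \<Rightarrow> bool" where
  "L_smooth L f G \<longleftrightarrow> C1_grad f G \<and> (\<forall>x y. norm (G x - G y) \<le> L * norm (x - y))"

definition strongly_convex :: "real \<Rightarrow> ('a::euclidean_space \<Rightarrow> real) \<Rightarrow> bool" where
  "strongly_convex m f \<longleftrightarrow> convex_on UNIV (\<lambda>x. f x - (m / 2) * (norm x)\<^sup>2)"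

definition in_F :: "real \<Rightarrow> real \<Rightarrow> ('a::euclidean_space \<Rightarrow> real) \<Rightarrow> ('a \<Rightarrow> 'a) \<Rightarrow> bool" where
  "in_F m L f G \<longleftrightarrow> L_smooth L f G \<and> strongly_convex m f"

text \<open>Membership in S(m,L); the quadratic form of the block matrix written out.\<close>
definition in_S :: "real \<Rightarrow> real \<Rightarrow> ('a::euclidean_space \<Rightarrow> real) \<Rightarrow> ('a \<Rightarrow> 'a) \<Rightarrow> bool" where
  "in_S m L g G \<longleftrightarrow> C1_grad g G \<and>
     (\<exists>!xs. G xs = 0 \<and>
        (\<forall>x. - 2 * m * L * (norm (x - xs))\<^sup>2 + 2 * (L + m) * inner (x - xs) (G x)
              - 2 * (norm (G x))\<^sup>2 \<ge> 0))"

text \<open>One Finito step with selected index i (indices 0..n-1).\<close>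
definition finito_step :: "nat \<Rightarrow> real \<Rightarrow> (nat \<Rightarrow> 'a \<Rightarrow> 'a::euclidean_space)
    \<Rightarrow> (nat \<Rightarrow> 'a) \<times> (nat \<Rightarrow> 'a) \<Rightarrow> nat \<Rightarrow> (nat \<Rightarrow> 'a) \<times> (nat \<Rightarrow> 'a)" where
  "finito_step n \<alpha> G st i =
     (let x = fst st; y = snd st;
          v = (1 / real n) *\<^sub>R (\<Sum>j<n. x j) - \<alpha> *\<^sub>R (\<Sum>j<n. y j)
      in (x(i := v), y(i := G i v)))"

definition finito_run :: "nat \<Rightarrow> real \<Rightarrow> (nat \<Rightarrow> 'a \<Rightarrow> 'a::euclidean_space)
    \<Rightarrow> (nat \<Rightarrow> 'a) \<Rightarrow> (nat \<Rightarrow> 'a) \<Rightarrow> nat list \<Rightarrow> (nat \<Rightarrow> 'a) \<times> (nat \<Rightarrow> 'a)" where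
  "finito_run n \<alpha> G x0 y0 is = foldl (finito_step n \<alpha> G) (x0, y0) is"

definition vbar :: "nat \<Rightarrow> real \<Rightarrow> (nat \<Rightarrow> 'a::euclidean_space) \<times> (nat \<Rightarrow> 'a) \<Rightarrow> 'a" where
  "vbar n \<alpha> st = (1 / real n) *\<^sub>R (\<Sum>j<n. fst st j) - \<alpha> *\<^sub>R (\<Sum>j<n. snd st j)"

text \<open>Expectation at iteration k of a function Phi of the state, with i_0,...,i_(k-1)
  IID uniform on {0..n-1}: the uniform average over all n^k index sequences.\<close>
definition finito_E :: "nat \<Rightarrow> real \<Rightarrow> (nat \<Rightarrow> 'a \<Rightarrow> 'a::euclidean_space)
    \<Rightarrow> (nat \<Rightarrow> 'a) \<Rightarrow> (nat \<Rightarrow> 'a) \<Rightarrow> nat \<Rightarrow> ((nat \<Rightarrow> 'a) \<times> (nat \<Rightarrow> 'a) \<Rightarrow> real) \<Rightarrow> real" where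
  "finito_E n \<alpha> G x0 y0 k Phi =
     (\<Sum>is\<in>{is. set is \<subseteq> {..<n} \<and> length is = k}. Phi (finito_run n \<alpha> G x0 y0 is)) / real n ^ k"

end

theory Submission
  imports Defs
begin


lemma line_deriv:
  fixes f :: "'a::euclidean_space \<Rightarrow> real"
  assumes "\<forall>z. GDERIV f z :> G z"
  shows "((\<lambda>t. f (x + t *\<^sub>R d)) has_real_derivative inner (G (x + t *\<^sub>R d)) d) (at t)"
proof -
  have g: "((\<lambda>t. x + t *\<^sub>R d) has_derivative (\<lambda>h. h *\<^sub>R d)) (at t)"
    by (auto intro!: derivative_eq_intros)
  have f: "(f has_derivative (\<lambda>h. inner h (G (x + t *\<^sub>R d)))) (at (x + t *\<^sub>R d))"
    using assms unfolding gderiv_def by blast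
  have "((\<lambda>t. f (x + t *\<^sub>R d)) has_derivative (\<lambda>h. inner (h *\<^sub>R d) (G (x + t *\<^sub>R d)))) (at t)"
    using has_derivative_compose[OF g f] by (simp add: o_def)
  then show ?thesis unfolding has_field_derivative_def
    by (rule has_derivative_subst) (auto simp: inner_commute)
qed

lemma descent:
  fixes f :: "'a::euclidean_space \<Rightarrow> real"
  assumes D: "\<forall>z. GDERIV f z :> G z" and Lip: "\<forall>x y. norm (G x - G y) \<le> L * norm (x - y)"
  shows "f y \<le> f x + inner (G x) (y - x) + L / 2 * (norm (y - x))\<^sup>2"
proof -
  define d where "d = y - x"
  define \<psi> where "\<psi> t = f (x + t *\<^sub>R d) - t * inner (G x) d - L / 2 * t\<^sup>2 * (norm d)\<^sup>2" for t
  have "\<psi> 1 \<le> \<psi> 0"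
  proof (rule DERIV_nonpos_imp_nonincreasing[of 0 1])
    fix t :: real assume t: "0 \<le> t" "t \<le> 1"
    have der: "(\<psi> has_real_derivative (inner (G (x + t *\<^sub>R d)) d - inner (G x) d - L / 2 * (2 * t) * (norm d)\<^sup>2)) (at t)"
      unfolding \<psi>_def
      by (rule derivative_eq_intros line_deriv[OF D] refl | simp)+
    have "inner (G (x + t *\<^sub>R d)) d - inner (G x) d = inner (G (x + t *\<^sub>R d) - G x) d"
      by (simp add: inner_diff_left)
    also have "\<dots> \<le> norm (G (x + t *\<^sub>R d) - G x) * norm d" by (rule norm_cauchy_schwarz)
    also have "\<dots> \<le> L * norm (t *\<^sub>R d) * norm d"
      using Lip[rule_format, of "x + t *\<^sub>R d" x] by (simp add: mult_right_mono)
    also have "\<dots> = L / 2 * (2 * t) * (norm d)\<^sup>2" using t by (simp add: power2_eq_square)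
    finally show "\<exists>y. (\<psi> has_real_derivative y) (at t) \<and> y \<le> 0" using der by (intro exI[of _ "_"] conjI) auto
  qed simp
  then show ?thesis unfolding \<psi>_def d_def by (simp add: algebra_simps)
qed

lemma convex_first_order:
  fixes h :: "'a::euclidean_space \<Rightarrow> real"
  assumes cv: "convex_on UNIV h" and D: "\<forall>z. GDERIV h z :> H z"
  shows "h x + inner (H x) (y - x) \<le> h y"
proof -
  define d where "d = y - x"
  define \<phi> where "\<phi> t = h (x + t *\<^sub>R d)" for t
  have "convex_on UNIV \<phi>"
  proof (rule convex_onI)
    fix t a b :: real assume t: "0 < t" "t < 1"
    have "x + ((1 - t) *\<^sub>R a + t *\<^sub>R b) *\<^sub>R d = (1 - t) *\<^sub>R (x + a *\<^sub>R d) + t *\<^sub>R (x + b *\<^sub>R d)"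
      by (simp add: algebra_simps)
    then show "\<phi> ((1 - t) *\<^sub>R a + t *\<^sub>R b) \<le> (1 - t) * \<phi> a + t * \<phi> b"
      unfolding \<phi>_def using convex_onD[OF cv, of t] t by simp
  qed simp
  moreover have "(\<phi> has_real_derivative inner (H x) d) (at 0 within UNIV)"
    unfolding \<phi>_def using line_deriv[OF D, of x d 0] by simp
  ultimately have "\<phi> 1 - \<phi> 0 \<ge> inner (H x) d * (1 - 0)"
    by (intro convex_on_imp_above_tangent) auto
  then show ?thesis unfolding \<phi>_def d_def by simp
qed



lemma half_coco:
  fixes h :: "'a::euclidean_space \<Rightarrow> real"
  assumes cv: "convex_on UNIV h" and D: "\<forall>z. GDERIV h z :> H z"
    and desc: "\<forall>x y. h y \<le> h x + inner (H x) (y - x) + M / 2 * (norm (y - x))\<^sup>2"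
    and s: "0 < s"
  shows "s * (1 - M * s / 2) * (norm (H y - H x))\<^sup>2 \<le> h y - h x - inner (H x) (y - x)"
proof -
  define DD where "DD = H y - H x"
  define z where "z = y - s *\<^sub>R DD"
  have 1: "h x + inner (H x) (z - x) \<le> h z" by (rule convex_first_order[OF cv D])
  have 2: "h z \<le> h y + inner (H y) (z - y) + M / 2 * (norm (z - y))\<^sup>2" using desc by blast
  have zx: "z - x = (y - x) - s *\<^sub>R DD" and zy: "z - y = - (s *\<^sub>R DD)" unfolding z_def by auto
  have "inner (H y) DD - inner (H x) DD = (norm DD)\<^sup>2"
    unfolding DD_def by (simp add: inner_diff_left power2_norm_eq_inner)
  then show ?thesis using 1 2 unfolding zx zy DD_def[symmetric]
    by (simp add: inner_diff_right power2_eq_square algebra_simps)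
qed

lemma coco:
  fixes h :: "'a::euclidean_space \<Rightarrow> real"
  assumes cv: "convex_on UNIV h" and D: "\<forall>z. GDERIV h z :> H z"
    and desc: "\<forall>x y. h y \<le> h x + inner (H x) (y - x) + M / 2 * (norm (y - x))\<^sup>2"
    and M: "0 \<le> M"
  shows "(norm (H y - H x))\<^sup>2 \<le> M * inner (H y - H x) (y - x)"
proof -
  have key: "s * (2 - M * s) * (norm (H y - H x))\<^sup>2 \<le> inner (H y - H x) (y - x)" if "0 < s" for s
  proof -
    have a: "s * (1 - M * s / 2) * (norm (H y - H x))\<^sup>2 \<le> h y - h x - inner (H x) (y - x)"
      by (rule half_coco[OF cv D desc that])
    have b: "s * (1 - M * s / 2) * (norm (H x - H y))\<^sup>2 \<le> h x - h y - inner (H y) (x - y)"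
      by (rule half_coco[OF cv D desc that])
    have "norm (H x - H y) = norm (H y - H x)" by (rule norm_minus_commute)
    moreover have "inner (H y - H x) (y - x) = - inner (H x) (y - x) - inner (H y) (x - y)"
      by (simp add: inner_diff algebra_simps inner_commute)
    ultimately show ?thesis using a b by (simp add: algebra_simps)
  qed
  show ?thesis
  proof (cases "M = 0")
    case True
    let ?N = "(norm (H y - H x))\<^sup>2" and ?I = "inner (H y - H x) (y - x)"
    have "?N = 0"
    proof (rule ccontr)
      assume ne: "?N \<noteq> 0"
      then have pos: "?N > 0" by simp
      have "((\<bar>?I\<bar> + 1) / ?N) * 2 * ?N \<le> ?I"
        using key[of "(\<bar>?I\<bar> + 1) / ?N"] pos True by simp
      then have "2 * (\<bar>?I\<bar> + 1) \<le> ?I" using pos by simp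
      moreover have "\<And>c::real. 2 * (\<bar>c\<bar> + 1) \<le> c \<Longrightarrow> False" by (smt (verit))
      ultimately show False by blast
    qed
    then show ?thesis using True by simp
  next
    case False
    then have Mp: "M > 0" using M by simp
    have "(1 / M) * (2 - M * (1 / M)) * (norm (H y - H x))\<^sup>2 \<le> inner (H y - H x) (y - x)"
      using key[of "1/M"] Mp by simp
    then have "(1 / M) * (norm (H y - H x))\<^sup>2 \<le> inner (H y - H x) (y - x)" using Mp by simp
    then show ?thesis using Mp by (simp add: field_simps)
  qed
qed

lemma gderiv_normsq: "GDERIV (\<lambda>x::'a::euclidean_space. (norm x)\<^sup>2) z :> 2 *\<^sub>R z"
  unfolding gderiv_def power2_norm_eq_inner
  by (rule derivative_eq_intros refl | simp add: inner_commute)+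

lemma interp:
  fixes f :: "'a::euclidean_space \<Rightarrow> real"
  assumes F: "in_F m L f G" and m: "0 \<le> m" "m \<le> L"
  shows "(norm (G x - G y))\<^sup>2 \<le> (L + m) * inner (G x - G y) (x - y) - m * L * (norm (x - y))\<^sup>2"
proof -
  define h where "h z = f z - (m / 2) * (norm z)\<^sup>2" for z
  define H where "H z = G z - m *\<^sub>R z" for z
  have Df: "\<forall>z. GDERIV f z :> G z" and Lip: "\<forall>x y. norm (G x - G y) \<le> L * norm (x - y)"
    and cv: "convex_on UNIV h"
    using F unfolding in_F_def L_smooth_def C1_grad_def strongly_convex_def h_def by auto
  have Dh: "\<forall>z. GDERIV h z :> H z"
  proof
    fix z
    have n2: "GDERIV (\<lambda>w::'a. m / 2 * (norm w)\<^sup>2) z :> m *\<^sub>R z"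
      unfolding gderiv_def power2_norm_eq_inner
      by (rule derivative_eq_intros refl | simp add: inner_commute algebra_simps)+
    have "GDERIV h z :> G z - m *\<^sub>R z"
      unfolding h_def by (rule GDERIV_diff[OF spec[OF Df] n2])
    then show "GDERIV h z :> H z" unfolding H_def by simp
  qed
  have sq: "(norm b)\<^sup>2 - (norm a)\<^sup>2 - 2 * inner a (b - a) = (norm (b - a))\<^sup>2" for a b :: 'a
    by (simp add: power2_norm_eq_inner inner_diff algebra_simps inner_commute)
  have desc: "\<forall>a b. h b \<le> h a + inner (H a) (b - a) + (L - m) / 2 * (norm (b - a))\<^sup>2"
  proof (intro allI)
    fix a b
    have "f b \<le> f a + inner (G a) (b - a) + L / 2 * (norm (b - a))\<^sup>2" by (rule descent[OF Df Lip])
    moreover have "h b - h a - inner (H a) (b - a) = f b - f a - inner (G a) (b - a) - m / 2 * ((norm b)\<^sup>2 - (norm a)\<^sup>2 - 2 * inner a (b - a))"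
      unfolding h_def H_def by (simp add: inner_diff_left algebra_simps)
    ultimately show "h b \<le> h a + inner (H a) (b - a) + (L - m) / 2 * (norm (b - a))\<^sup>2"
      unfolding sq by (simp add: algebra_simps diff_divide_distrib)
  qed
  have c: "(norm (H x - H y))\<^sup>2 \<le> (L - m) * inner (H x - H y) (x - y)"
    using coco[OF cv Dh desc, where x=y and y=x] m by simp
  have e: "H x - H y = (G x - G y) - m *\<^sub>R (x - y)" unfolding H_def by (simp add: algebra_simps)
  have gen: "(norm A)\<^sup>2 \<le> (L + m) * inner A B - m * L * (norm B)\<^sup>2"
    if "(norm (A - m *\<^sub>R B))\<^sup>2 \<le> (L - m) * inner (A - m *\<^sub>R B) B" for A B :: 'a
  proof -
    have 1: "(norm (A - m *\<^sub>R B))\<^sup>2 = (norm A)\<^sup>2 - 2 * m * inner A B + m\<^sup>2 * (norm B)\<^sup>2"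
      unfolding power2_norm_eq_inner by (simp add: inner_diff inner_commute algebra_simps power2_eq_square)
    have 2: "inner (A - m *\<^sub>R B) B = inner A B - m * (norm B)\<^sup>2"
      by (simp add: power2_norm_eq_inner inner_diff)
    have "(norm A)\<^sup>2 - 2 * m * inner A B + m\<^sup>2 * (norm B)\<^sup>2 \<le> (L - m) * (inner A B - m * (norm B)\<^sup>2)"
      using that unfolding 1 2 .
    then show ?thesis by (simp add: algebra_simps power2_eq_square)
  qed
  show ?thesis by (rule gen) (use c e in simp)
qed



lemma sum_normsq_shift:
  fixes p :: "nat \<Rightarrow> 'a::real_inner"
  shows "(\<Sum>i\<in>A. (norm (p i + w))\<^sup>2) = (\<Sum>i\<in>A. (norm (p i))\<^sup>2) + 2 * inner (\<Sum>i\<in>A. p i) w + real (card A) * (norm w)\<^sup>2"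
proof -
  have "(norm (p i + w))\<^sup>2 = (norm (p i))\<^sup>2 + 2 * inner (p i) w + (norm w)\<^sup>2" for i
    unfolding power2_norm_eq_inner by (simp add: inner_add inner_commute)
  then show ?thesis by (simp add: sum.distrib inner_sum_left sum_distrib_left)
qed

lemma young:
  fixes p q :: "'a::real_inner"
  assumes t: "0 < t"
  shows "(norm (p + q))\<^sup>2 \<le> (1 + t) * (norm p)\<^sup>2 + (1 + 1 / t) * (norm q)\<^sup>2"
proof -
  have "0 \<le> (norm (t *\<^sub>R p - q))\<^sup>2" by simp
  also have "\<dots> = t\<^sup>2 * (norm p)\<^sup>2 - 2 * t * inner p q + (norm q)\<^sup>2"
    unfolding power2_norm_eq_inner by (simp add: inner_diff inner_commute algebra_simps power2_eq_square)
  finally have "2 * t * inner p q \<le> t * (t * (norm p)\<^sup>2) + (norm q)\<^sup>2" by (simp add: power2_eq_square algebra_simps)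
  then have "t * (2 * inner p q) \<le> t * (t * (norm p)\<^sup>2 + (norm q)\<^sup>2 / t)"
    using t by (simp add: algebra_simps)
  then have "2 * inner p q \<le> t * (norm p)\<^sup>2 + (norm q)\<^sup>2 / t" using t by simp
  moreover have "(norm (p + q))\<^sup>2 = (norm p)\<^sup>2 + 2 * inner p q + (norm q)\<^sup>2"
    unfolding power2_norm_eq_inner by (simp add: inner_add inner_commute)
  ultimately show ?thesis by (simp add: algebra_simps)
qed

lemma varbound:
  fixes a b g :: "nat \<Rightarrow> 'a::real_inner" and \<alpha> :: real
  assumes n: "0 < n" and t: "0 < t" and s: "0 < s"
  defines "N \<equiv> real n"
  defines "e \<equiv> (1 / N) *\<^sub>R (\<Sum>i<n. a i) - \<alpha> *\<^sub>R (\<Sum>i<n. b i)"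
  defines "gr \<equiv> (1 / N) *\<^sub>R (\<Sum>i<n. g i)"
  shows "(1 / N) * (\<Sum>i<n. (norm (e + (1 / N) *\<^sub>R (e - a i) - \<alpha> *\<^sub>R (g i - b i)))\<^sup>2)
    \<le> (norm e)\<^sup>2 - 2 * \<alpha> * inner e gr + \<alpha>\<^sup>2 * (norm gr)\<^sup>2
       + (1 + t) / N * ((1 + s) / N\<^sup>2 * (\<Sum>i<n. (norm (a i))\<^sup>2) + (1 + 1 / s) * \<alpha>\<^sup>2 * (\<Sum>i<n. (norm (b i))\<^sup>2))
       + (1 + 1 / t) * \<alpha>\<^sup>2 * ((1 / N) * (\<Sum>i<n. (norm (g i))\<^sup>2) - (norm gr)\<^sup>2)"
proof -
  have N: "N > 0" using n unfolding N_def by simp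
  have cardn: "real (card {..<n}) = N" unfolding N_def by simp
  have Sg: "(\<Sum>i<n. g i) = N *\<^sub>R gr" unfolding gr_def using N by simp
  define u where "u i = (1 / N) *\<^sub>R (e - a i) + \<alpha> *\<^sub>R b i" for i
  define r where "r i = u i - \<alpha> *\<^sub>R (g i - gr)" for i
  define z where "z i = \<alpha> *\<^sub>R b i - (1 / N) *\<^sub>R a i" for i
  define w where "w i = (1 / N) *\<^sub>R (e - a i) - \<alpha> *\<^sub>R (g i - b i)" for i
  have wr: "w i = r i + (- (\<alpha> *\<^sub>R gr))" for i unfolding w_def r_def u_def by (simp add: algebra_simps)
  have uz: "u i = z i + (1 / N) *\<^sub>R e" for i unfolding u_def z_def by (simp add: algebra_simps)
  have Sz: "(\<Sum>i<n. z i) = - e"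
    unfolding z_def e_def by (simp add: sum_subtractf scaleR_sum_right)
  have Su: "(\<Sum>i<n. u i) = 0"
  proof -
    have "(\<Sum>i<n. u i) = (\<Sum>i<n. z i) + (\<Sum>i<n. (1 / N) *\<^sub>R e)" unfolding uz by (rule sum.distrib)
    also have "\<dots> = - e + N *\<^sub>R ((1 / N) *\<^sub>R e)" unfolding Sz sum_constant_scaleR by (simp add: N_def)
    also have "\<dots> = 0" using N by simp
    finally show ?thesis .
  qed
  have Sr: "(\<Sum>i<n. r i) = 0"
  proof -
    have "(\<Sum>i<n. r i) = (\<Sum>i<n. u i) - \<alpha> *\<^sub>R ((\<Sum>i<n. g i) - (\<Sum>i<n. gr))"
      unfolding r_def by (simp add: sum_subtractf scaleR_diff_right flip: scaleR_sum_right)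
    also have "\<dots> = 0" unfolding Su Sg sum_constant_scaleR by (simp add: N_def)
    finally show ?thesis .
  qed
  have Sw: "(\<Sum>i<n. w i) = - (N * \<alpha>) *\<^sub>R gr"
    unfolding wr sum.distrib Sr sum_constant_scaleR by (simp add: N_def)
  have S1: "(\<Sum>i<n. (norm (e + (1 / N) *\<^sub>R (e - a i) - \<alpha> *\<^sub>R (g i - b i)))\<^sup>2)
      = (\<Sum>i<n. (norm (w i))\<^sup>2) + 2 * inner (\<Sum>i<n. w i) e + N * (norm e)\<^sup>2"
  proof -
    have "(\<Sum>i<n. (norm (e + (1 / N) *\<^sub>R (e - a i) - \<alpha> *\<^sub>R (g i - b i)))\<^sup>2) = (\<Sum>i<n. (norm (w i + e))\<^sup>2)"
      by (rule sum.cong) (simp_all add: w_def algebra_simps)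
    then show ?thesis using sum_normsq_shift[of w e "{..<n}"] cardn by simp
  qed
  have S2: "(\<Sum>i<n. (norm (w i))\<^sup>2) = (\<Sum>i<n. (norm (r i))\<^sup>2) + N * \<alpha>\<^sup>2 * (norm gr)\<^sup>2"
    unfolding wr sum_normsq_shift Sr cardn by (simp add: power_mult_distrib)
  have S3: "(\<Sum>i<n. (norm (r i))\<^sup>2) \<le> (1 + t) * (\<Sum>i<n. (norm (u i))\<^sup>2) + (1 + 1 / t) * \<alpha>\<^sup>2 * (\<Sum>i<n. (norm (g i - gr))\<^sup>2)"
  proof -
    have "(norm (r i))\<^sup>2 \<le> (1 + t) * (norm (u i))\<^sup>2 + (1 + 1 / t) * (\<alpha>\<^sup>2 * (norm (g i - gr))\<^sup>2)" for i
    proof -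
      have "r i = u i + (- (\<alpha> *\<^sub>R (g i - gr)))" unfolding r_def by simp
      then show ?thesis using young[OF t, of "u i" "- (\<alpha> *\<^sub>R (g i - gr))"] by (simp add: power_mult_distrib)
    qed
    then have "(\<Sum>i<n. (norm (r i))\<^sup>2) \<le> (\<Sum>i<n. (1 + t) * (norm (u i))\<^sup>2 + (1 + 1 / t) * (\<alpha>\<^sup>2 * (norm (g i - gr))\<^sup>2))"
      by (rule sum_mono)
    then show ?thesis by (simp add: sum.distrib sum_distrib_left mult.assoc)
  qed
  have S4: "(\<Sum>i<n. (norm (g i - gr))\<^sup>2) = (\<Sum>i<n. (norm (g i))\<^sup>2) - N * (norm gr)\<^sup>2"
    using sum_normsq_shift[of g "- gr" "{..<n}"] unfolding Sg cardn
    by (simp add: power2_norm_eq_inner)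
  have S5: "(\<Sum>i<n. (norm (u i))\<^sup>2) \<le> (\<Sum>i<n. (norm (z i))\<^sup>2)"
  proof -
    have "(\<Sum>i<n. (norm (u i))\<^sup>2) = (\<Sum>i<n. (norm (z i))\<^sup>2) - (1 / N) * (norm e)\<^sup>2"
    proof -
      have nee: "norm e * norm e = inner e e" by (metis power2_eq_square power2_norm_eq_inner)
      show ?thesis unfolding uz sum_normsq_shift Sz cardn using N nee
        by (simp add: power2_norm_eq_inner power2_eq_square field_simps)
    qed
    then show ?thesis using N by simp
  qed
  have S6: "(\<Sum>i<n. (norm (z i))\<^sup>2) \<le> (1 + s) / N\<^sup>2 * (\<Sum>i<n. (norm (a i))\<^sup>2) + (1 + 1 / s) * \<alpha>\<^sup>2 * (\<Sum>i<n. (norm (b i))\<^sup>2)"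
  proof -
    have pi: "(norm (z i))\<^sup>2 \<le> (1 + s) / N\<^sup>2 * (norm (a i))\<^sup>2 + (1 + 1 / s) * \<alpha>\<^sup>2 * (norm (b i))\<^sup>2" for i
    proof -
      have "z i = (- ((1 / N) *\<^sub>R a i)) + \<alpha> *\<^sub>R b i" unfolding z_def by simp
      then show ?thesis using young[OF s, of "- ((1 / N) *\<^sub>R a i)" "\<alpha> *\<^sub>R b i"] N
        by (simp add: power_mult_distrib power_divide mult.assoc)
    qed
    have "(\<Sum>i<n. (norm (z i))\<^sup>2) \<le> (\<Sum>i<n. (1 + s) / N\<^sup>2 * (norm (a i))\<^sup>2 + (1 + 1 / s) * \<alpha>\<^sup>2 * (norm (b i))\<^sup>2)"
      by (rule sum_mono) (rule pi)
    then show ?thesis by (simp only: sum.distrib sum_distrib_left[symmetric])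
  qed
  define Sa where "Sa = (\<Sum>i<n. (norm (a i))\<^sup>2)"
  define Sb where "Sb = (\<Sum>i<n. (norm (b i))\<^sup>2)"
  define Sgg where "Sgg = (\<Sum>i<n. (norm (g i))\<^sup>2)"
  have W: "(\<Sum>i<n. (norm (w i))\<^sup>2) \<le> (1 + t) * ((1 + s) / N\<^sup>2 * Sa + (1 + 1 / s) * \<alpha>\<^sup>2 * Sb)
     + (1 + 1 / t) * \<alpha>\<^sup>2 * (Sgg - N * (norm gr)\<^sup>2) + N * \<alpha>\<^sup>2 * (norm gr)\<^sup>2"
  proof -
    have "(1 + t) * (\<Sum>i<n. (norm (u i))\<^sup>2) \<le> (1 + t) * ((1 + s) / N\<^sup>2 * Sa + (1 + 1 / s) * \<alpha>\<^sup>2 * Sb)"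
      using S5 S6 t unfolding Sa_def Sb_def by (intro mult_left_mono) auto
    then show ?thesis using S2 S3[unfolded S4] unfolding Sgg_def by linarith
  qed
  have L: "(1 / N) * (\<Sum>i<n. (norm (e + (1 / N) *\<^sub>R (e - a i) - \<alpha> *\<^sub>R (g i - b i)))\<^sup>2)
     = (1 / N) * (\<Sum>i<n. (norm (w i))\<^sup>2) - 2 * \<alpha> * inner e gr + (norm e)\<^sup>2"
    unfolding S1 Sw using N by (simp add: field_simps inner_commute)
  have "(1 / N) * (\<Sum>i<n. (norm (w i))\<^sup>2) \<le> (1 / N) * ((1 + t) * ((1 + s) / N\<^sup>2 * Sa + (1 + 1 / s) * \<alpha>\<^sup>2 * Sb)
     + (1 + 1 / t) * \<alpha>\<^sup>2 * (Sgg - N * (norm gr)\<^sup>2) + N * \<alpha>\<^sup>2 * (norm gr)\<^sup>2)"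
    using W N by (intro mult_left_mono) auto
  also have "\<dots> = (1 + t) / N * ((1 + s) / N\<^sup>2 * Sa + (1 + 1 / s) * \<alpha>\<^sup>2 * Sb)
       + (1 + 1 / t) * \<alpha>\<^sup>2 * ((1 / N) * Sgg - (norm gr)\<^sup>2) + \<alpha>\<^sup>2 * (norm gr)\<^sup>2"
    using N by (simp add: field_simps)
  finally show ?thesis unfolding L Sa_def[symmetric] Sb_def[symmetric] Sgg_def[symmetric] by linarith
qed


lemma E_rec:
  "finito_E n \<alpha> G x0 y0 (Suc k) Phi =
    (1 / real n) * (\<Sum>i<n. finito_E n \<alpha> G (fst (finito_step n \<alpha> G (x0, y0) i)) (snd (finito_step n \<alpha> G (x0, y0) i)) k Phi)"
proof -
  let ?S = "\<lambda>k. {is. set is \<subseteq> {..<n} \<and> length is = k}"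
  have run: "finito_run n \<alpha> G x0 y0 (i # js) = finito_run n \<alpha> G (fst (finito_step n \<alpha> G (x0, y0) i)) (snd (finito_step n \<alpha> G (x0, y0) i)) js" for i js
    unfolding finito_run_def by simp
  have "(\<Sum>is\<in>?S (Suc k). Phi (finito_run n \<alpha> G x0 y0 is))
      = (\<Sum>p\<in>?S k \<times> {..<n}. Phi (finito_run n \<alpha> G x0 y0 ((\<lambda>(xs, i). i # xs) p)))"
    unfolding lists_length_Suc_eq by (subst sum.reindex[OF inj_split_Cons]) (simp add: o_def)
  also have "\<dots> = (\<Sum>js\<in>?S k. \<Sum>i<n. Phi (finito_run n \<alpha> G x0 y0 (i # js)))"
    unfolding sum.cartesian_product by (rule sum.cong) (auto split: prod.splits)
  also have "\<dots> = (\<Sum>i<n. \<Sum>js\<in>?S k. Phi (finito_run n \<alpha> G x0 y0 (i # js)))"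
    by (rule sum.swap)
  finally have eq: "(\<Sum>is\<in>?S (Suc k). Phi (finito_run n \<alpha> G x0 y0 is))
     = (\<Sum>i<n. \<Sum>js\<in>?S k. Phi (finito_run n \<alpha> G (fst (finito_step n \<alpha> G (x0, y0) i)) (snd (finito_step n \<alpha> G (x0, y0) i)) js))"
    unfolding run .
  show ?thesis unfolding finito_E_def eq
    by (simp add: sum_divide_distrib sum_distrib_left field_simps)
qed

lemma E_bound:
  fixes V Phi :: "(nat \<Rightarrow> 'a::euclidean_space) \<times> (nat \<Rightarrow> 'a) \<Rightarrow> real"
  assumes n: "0 < n" and rho: "0 \<le> \<rho>" and PV: "\<forall>st. Phi st \<le> V st"
    and dec: "\<forall>st. (1 / real n) * (\<Sum>i<n. V (finito_step n \<alpha> G st i)) \<le> \<rho> * V st"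
  shows "finito_E n \<alpha> G x0 y0 k Phi \<le> \<rho> ^ k * V (x0, y0)"
proof (induction k arbitrary: x0 y0)
  case 0
  have "{is. set is \<subseteq> {..<n} \<and> length is = 0} = {[]}" by auto
  then show ?case using PV unfolding finito_E_def finito_run_def by simp
next
  case (Suc k)
  let ?st = "\<lambda>i. finito_step n \<alpha> G (x0, y0) i"
  have "finito_E n \<alpha> G x0 y0 (Suc k) Phi = (1 / real n) * (\<Sum>i<n. finito_E n \<alpha> G (fst (?st i)) (snd (?st i)) k Phi)"
    by (rule E_rec)
  also have "\<dots> \<le> (1 / real n) * (\<Sum>i<n. \<rho> ^ k * V (?st i))"
  proof -
    have "finito_E n \<alpha> G (fst (?st i)) (snd (?st i)) k Phi \<le> \<rho> ^ k * V (?st i)" for i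
      using Suc.IH[of "fst (?st i)" "snd (?st i)"] by simp
    then show ?thesis by (intro mult_left_mono sum_mono) auto
  qed
  also have "\<dots> = \<rho> ^ k * ((1 / real n) * (\<Sum>i<n. V (?st i)))"
    by (simp add: sum_distrib_left)
  also have "\<dots> \<le> \<rho> ^ k * (\<rho> * V (x0, y0))"
    using dec rho by (intro mult_left_mono) auto
  finally show ?case by (simp add: mult_ac)
qed

lemma upd_sum:
  fixes F :: "nat \<Rightarrow> 'b \<Rightarrow> 'c::ab_group_add"
  assumes "i < n"
  shows "(\<Sum>j<n. F j ((h(i := w)) j)) = (\<Sum>j<n. F j (h j)) - F i (h i) + F i w"
proof -
  have fin: "finite {..<n}" and i: "i \<in> {..<n}" using assms by auto
  have "(\<Sum>j<n. F j ((h(i := w)) j)) = F i w + (\<Sum>j\<in>{..<n} - {i}. F j (h j))"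
    by (simp add: sum.remove[OF fin i])
  moreover have "(\<Sum>j<n. F j (h j)) = F i (h i) + (\<Sum>j\<in>{..<n} - {i}. F j (h j))"
    by (simp add: sum.remove[OF fin i])
  ultimately show ?thesis by (simp add: algebra_simps)
qed



definition Vf :: "real \<Rightarrow> real \<Rightarrow> nat \<Rightarrow> real \<Rightarrow> (nat \<Rightarrow> 'a \<Rightarrow> 'a::euclidean_space) \<Rightarrow> 'a \<Rightarrow> (nat \<Rightarrow> 'a) \<times> (nat \<Rightarrow> 'a) \<Rightarrow> real" where
  "Vf c d n \<alpha> G xs st = c * (\<Sum>j<n. (norm (fst st j - xs))\<^sup>2) + d * (\<Sum>j<n. (norm (snd st j - G j xs))\<^sup>2)
     + (norm (vbar n \<alpha> st - xs))\<^sup>2"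

lemma sumhelper:
  fixes A B C R :: "nat \<Rightarrow> real"
  shows "(\<Sum>i<n. c * (X - A i + E) + d * (Y - B i + C i) + R i)
   = c * (real n * X - sum A {..<n} + real n * E) + d * (real n * Y - sum B {..<n} + sum C {..<n}) + sum R {..<n}"
  by (simp add: sum.distrib sum_subtractf sum_distrib_left algebra_simps)

lemma onestep:
  fixes G :: "nat \<Rightarrow> 'a \<Rightarrow> 'a::euclidean_space" and x y :: "nat \<Rightarrow> 'a" and \<alpha> :: real
  assumes n: "0 < n" and G0: "(\<Sum>i<n. G i xs) = 0" and t: "0 < t" and s: "0 < s"
  defines "N \<equiv> real n"
  defines "v \<equiv> vbar n \<alpha> (x, y)"
  defines "e \<equiv> v - xs"
  defines "gr \<equiv> (1 / N) *\<^sub>R (\<Sum>i<n. G i v)"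
  defines "X \<equiv> (\<Sum>j<n. (norm (x j - xs))\<^sup>2)"
  defines "Y \<equiv> (\<Sum>j<n. (norm (y j - G j xs))\<^sup>2)"
  defines "P \<equiv> (1 / N) * (\<Sum>i<n. (norm (G i v - G i xs))\<^sup>2)"
  shows "(1 / N) * (\<Sum>i<n. Vf c d n \<alpha> G xs (finito_step n \<alpha> G (x, y) i))
    \<le> c * (X - X / N + (norm e)\<^sup>2) + d * (Y - Y / N + P)
       + ((norm e)\<^sup>2 - 2 * \<alpha> * inner e gr + \<alpha>\<^sup>2 * (norm gr)\<^sup>2
       + (1 + t) / N * ((1 + s) / N\<^sup>2 * X + (1 + 1 / s) * \<alpha>\<^sup>2 * Y)
       + (1 + 1 / t) * \<alpha>\<^sup>2 * (P - (norm gr)\<^sup>2))"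
proof -
  have N: "N > 0" using n unfolding N_def by simp
  have step: "finito_step n \<alpha> G (x, y) i = (x(i := v), y(i := G i v))" for i
    unfolding finito_step_def v_def vbar_def by (simp add: Let_def)
  define Q where "Q i = e + (1 / N) *\<^sub>R (e - (x i - xs)) - \<alpha> *\<^sub>R ((G i v - G i xs) - (y i - G i xs))" for i
  have Vi: "Vf c d n \<alpha> G xs (finito_step n \<alpha> G (x, y) i)
      = c * (X - (norm (x i - xs))\<^sup>2 + (norm e)\<^sup>2) + d * (Y - (norm (y i - G i xs))\<^sup>2 + (norm (G i v - G i xs))\<^sup>2)
        + (norm (Q i))\<^sup>2" if i: "i < n" for i
  proof -
    have X1: "(\<Sum>j<n. (norm ((x(i := v)) j - xs))\<^sup>2) = X - (norm (x i - xs))\<^sup>2 + (norm e)\<^sup>2"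
      using upd_sum[OF i, of "\<lambda>j z. (norm (z - xs))\<^sup>2" x v] unfolding X_def e_def by simp
    have Y1: "(\<Sum>j<n. (norm ((y(i := G i v)) j - G j xs))\<^sup>2) = Y - (norm (y i - G i xs))\<^sup>2 + (norm (G i v - G i xs))\<^sup>2"
      using upd_sum[OF i, of "\<lambda>j z. (norm (z - G j xs))\<^sup>2" y "G i v"] unfolding Y_def by simp
    have sx: "(\<Sum>j<n. (x(i := v)) j) = (\<Sum>j<n. x j) - x i + v"
      using upd_sum[OF i, of "\<lambda>j z. z" x v] by simp
    have sy: "(\<Sum>j<n. (y(i := G i v)) j) = (\<Sum>j<n. y j) - y i + G i v"
      using upd_sum[OF i, of "\<lambda>j z. z" y "G i v"] by simp
    have vv: "(1 / N) *\<^sub>R (\<Sum>j<n. x j) - \<alpha> *\<^sub>R (\<Sum>j<n. y j) = v"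
      unfolding v_def vbar_def N_def by simp
    have "vbar n \<alpha> (x(i := v), y(i := G i v)) = ((1 / N) *\<^sub>R (\<Sum>j<n. x j) - \<alpha> *\<^sub>R (\<Sum>j<n. y j)) + (1 / N) *\<^sub>R (v - x i) - \<alpha> *\<^sub>R (G i v - y i)"
      unfolding vbar_def fst_conv snd_conv sx sy N_def by (simp add: algebra_simps)
    then have "vbar n \<alpha> (x(i := v), y(i := G i v)) = v + (1 / N) *\<^sub>R (v - x i) - \<alpha> *\<^sub>R (G i v - y i)"
      unfolding vv .
    then have "vbar n \<alpha> (x(i := v), y(i := G i v)) - xs = Q i"
      unfolding Q_def e_def by (simp add: algebra_simps)
    then show ?thesis unfolding Vf_def step fst_conv snd_conv X1 Y1 by simp
  qed
  have VB: "(1 / N) * (\<Sum>i<n. (norm (Q i))\<^sup>2) \<le> (norm e)\<^sup>2 - 2 * \<alpha> * inner e gr + \<alpha>\<^sup>2 * (norm gr)\<^sup>2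
       + (1 + t) / N * ((1 + s) / N\<^sup>2 * X + (1 + 1 / s) * \<alpha>\<^sup>2 * Y)
       + (1 + 1 / t) * \<alpha>\<^sup>2 * (P - (norm gr)\<^sup>2)"
  proof -
    have ea: "(1 / N) *\<^sub>R (\<Sum>i<n. x i - xs) - \<alpha> *\<^sub>R (\<Sum>i<n. y i - G i xs) = e"
      unfolding e_def v_def vbar_def sum_subtractf G0 using N by (simp add: N_def sum_constant_scaleR scaleR_diff_right)
    have ga: "(1 / N) *\<^sub>R (\<Sum>i<n. G i v - G i xs) = gr"
      unfolding gr_def sum_subtractf G0 by simp
    note VB0 = varbound[where a = "\<lambda>i. x i - xs" and b = "\<lambda>i. y i - G i xs" and g = "\<lambda>i. G i v - G i xs" and \<alpha> = \<alpha>,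
            OF n t s]
    show ?thesis using VB0 unfolding N_def[symmetric] ea ga Q_def X_def Y_def P_def by simp
  qed
  have "(\<Sum>i<n. Vf c d n \<alpha> G xs (finito_step n \<alpha> G (x, y) i))
      = (\<Sum>i<n. c * (X - (norm (x i - xs))\<^sup>2 + (norm e)\<^sup>2) + d * (Y - (norm (y i - G i xs))\<^sup>2 + (norm (G i v - G i xs))\<^sup>2)
        + (norm (Q i))\<^sup>2)"
    by (rule sum.cong) (simp_all add: Vi)
  also have "\<dots> = c * (N * X - X + N * (norm e)\<^sup>2) + d * (N * Y - Y + N * P) + (\<Sum>i<n. (norm (Q i))\<^sup>2)"
    unfolding sumhelper using N unfolding X_def Y_def P_def N_def by simp
  finally have sumeq: "(\<Sum>i<n. Vf c d n \<alpha> G xs (finito_step n \<alpha> G (x, y) i))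
     = c * (N * X - X + N * (norm e)\<^sup>2) + d * (N * Y - Y + N * P) + (\<Sum>i<n. (norm (Q i))\<^sup>2)" .
  have "(1 / N) * (c * (N * X - X + N * (norm e)\<^sup>2) + d * (N * Y - Y + N * P) + (\<Sum>i<n. (norm (Q i))\<^sup>2))
     = c * (X - X / N + (norm e)\<^sup>2) + d * (Y - Y / N + P) + (1 / N) * (\<Sum>i<n. (norm (Q i))\<^sup>2)"
    using N by (simp add: field_simps)
  then have "(1 / N) * (\<Sum>i<n. Vf c d n \<alpha> G xs (finito_step n \<alpha> G (x, y) i))
     = c * (X - X / N + (norm e)\<^sup>2) + d * (Y - Y / N + P) + (1 / N) * (\<Sum>i<n. (norm (Q i))\<^sup>2)"
    unfolding sumeq .
  then show ?thesis using VB by linarith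
qed



lemma arith3:
  fixes N m L X Y E lam q P :: real
  assumes N: "N \<ge> 48 * L\<^sup>2 / m\<^sup>2" and m: "0 < m" "m \<le> L"
    and X: "0 \<le> X" and Y: "0 \<le> Y" and E: "0 \<le> E" and q: "0 \<le> q"
    and lam: "m * E \<le> lam" and P: "P \<le> L\<^sup>2 * E"
  defines "c \<equiv> 3 / (8 * N)" and "d \<equiv> 1 / (N ^ 2 * m\<^sup>2)" and "\<alpha> \<equiv> 1 / (2 * N * m)"
  shows "c * (X - X / N + E) + d * (Y - Y / N + P)
       + (E - 2 * \<alpha> * lam + \<alpha>\<^sup>2 * q
       + (1 + 1) / N * ((1 + 3) / N\<^sup>2 * X + (1 + 1 / 3) * \<alpha>\<^sup>2 * Y)
       + (1 + 1 / 1) * \<alpha>\<^sup>2 * (P - q))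
    \<le> (1 - 1 / (3 * N)) * (c * X + d * Y + E)"
proof -
  have Lm: "L\<^sup>2 / m\<^sup>2 \<ge> 1" using m by (simp add: power_mono)
  have N48: "N \<ge> 48" using N Lm by linarith
  have Np: "N > 0" using N48 by simp
  have L2: "L\<^sup>2 \<le> N * m\<^sup>2 / 48" using N m by (simp add: field_simps)
  have hX: "c * (X - X / N) + (1 + 1) / N * ((1 + 3) / N\<^sup>2 * X) \<le> (1 - 1 / (3 * N)) * (c * X)"
  proof -
    have "(1 - 1 / (3 * N)) * (c * X) - (c * (X - X / N) + (1 + 1) / N * ((1 + 3) / N\<^sup>2 * X)) = X * (N - 32) / (4 * N ^ 3)"
      unfolding c_def using Np by (simp add: field_simps power2_eq_square power3_eq_cube)
    also have "\<dots> \<ge> 0" using X N48 Np by simp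
    finally show ?thesis by simp
  qed
  have hY: "d * (Y - Y / N) + (1 + 1) / N * ((1 + 1 / 3) * \<alpha>\<^sup>2 * Y) \<le> (1 - 1 / (3 * N)) * (d * Y)"
    unfolding d_def \<alpha>_def using Np m by (simp add: field_simps power2_eq_square)
  have a1: "2 * \<alpha> * lam \<ge> E / N"
  proof -
    have "2 * \<alpha> * lam \<ge> 2 * \<alpha> * (m * E)" using lam Np m unfolding \<alpha>_def by (intro mult_left_mono) auto
    moreover have "2 * \<alpha> * (m * E) = E / N" unfolding \<alpha>_def using m by simp
    ultimately show ?thesis by simp
  qed
  have K: "d + (1 + 1 / 1) * \<alpha>\<^sup>2 = 3 / (2 * N\<^sup>2 * m\<^sup>2)"
    unfolding d_def \<alpha>_def using Np m by (simp add: field_simps power2_eq_square)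
  have a2: "(d + (1 + 1 / 1) * \<alpha>\<^sup>2) * P \<le> E / (32 * N)"
  proof -
    have "(d + (1 + 1 / 1) * \<alpha>\<^sup>2) * P \<le> (3 / (2 * N\<^sup>2 * m\<^sup>2)) * (L\<^sup>2 * E)"
      unfolding K using P Np m by (intro mult_left_mono) auto
    also have "\<dots> \<le> (3 / (2 * N\<^sup>2 * m\<^sup>2)) * (N * m\<^sup>2 / 48 * E)"
      using L2 E Np m by (intro mult_left_mono mult_right_mono) auto
    also have "\<dots> = E / (32 * N)" using Np m by (simp add: field_simps power2_eq_square)
    finally show ?thesis .
  qed
  have a3: "\<alpha>\<^sup>2 * q \<ge> 0" using q by simp
  have hR: "c * E + d * P + (E - 2 * \<alpha> * lam + \<alpha>\<^sup>2 * q + (1 + 1 / 1) * \<alpha>\<^sup>2 * (P - q)) \<le> (1 - 1 / (3 * N)) * E"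
  proof -
    have "c * E + d * P + (E - 2 * \<alpha> * lam + \<alpha>\<^sup>2 * q + (1 + 1 / 1) * \<alpha>\<^sup>2 * (P - q))
        = c * E + (d + (1 + 1 / 1) * \<alpha>\<^sup>2) * P + E - 2 * \<alpha> * lam - \<alpha>\<^sup>2 * q"
      by (simp add: algebra_simps)
    also have "\<dots> \<le> c * E + E / (32 * N) + E - E / N"
      using a1 a2 a3 by linarith
    also have "\<dots> = (1 - 19 / (32 * N)) * E" unfolding c_def using Np by (simp add: field_simps)
    also have "\<dots> \<le> (1 - 1 / (3 * N)) * E" using Np E by (intro mult_right_mono) (auto simp: field_simps)
    finally show ?thesis .
  qed
  have "c * (X - X / N + E) + d * (Y - Y / N + P)
       + (E - 2 * \<alpha> * lam + \<alpha>\<^sup>2 * q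
       + (1 + 1) / N * ((1 + 3) / N\<^sup>2 * X + (1 + 1 / 3) * \<alpha>\<^sup>2 * Y)
       + (1 + 1 / 1) * \<alpha>\<^sup>2 * (P - q))
     = (c * (X - X / N) + (1 + 1) / N * ((1 + 3) / N\<^sup>2 * X))
       + (d * (Y - Y / N) + (1 + 1) / N * ((1 + 1 / 3) * \<alpha>\<^sup>2 * Y))
       + (c * E + d * P + (E - 2 * \<alpha> * lam + \<alpha>\<^sup>2 * q + (1 + 1 / 1) * \<alpha>\<^sup>2 * (P - q)))"
    by (simp add: algebra_simps)
  also have "\<dots> \<le> (1 - 1 / (3 * N)) * (c * X) + (1 - 1 / (3 * N)) * (d * Y) + (1 - 1 / (3 * N)) * E"
    using hX hY hR by linarith
  also have "\<dots> = (1 - 1 / (3 * N)) * (c * X + d * Y + E)" by (simp add: algebra_simps add_divide_distrib)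
  finally show ?thesis .
qed



lemma arith1:
  fixes N m L X Y E lam q P :: real
  assumes N: "N \<ge> sqrt (50 * L / m)" and m: "0 < m" "m \<le> L"
    and X: "0 \<le> X" and Y: "0 \<le> Y" and E: "0 \<le> E" and q: "0 \<le> q"
    and CS: "lam\<^sup>2 \<le> E * q" and P: "P \<le> (L + m) * lam - m * L * E"
  defines "c \<equiv> m / (10 * L)" and "d \<equiv> 1 / (5 * L\<^sup>2)" and "\<alpha> \<equiv> 1 / (5 * L)"
    and "\<rho> \<equiv> 1 - min (1 / (2 * N)) (m / (20 * L))"
  shows "c * (X - X / N + E) + d * (Y - Y / N + P)
       + (E - 2 * \<alpha> * lam + \<alpha>\<^sup>2 * q
       + (1 + 1 / 4) / N * ((1 + 1) / N\<^sup>2 * X + (1 + 1 / 1) * \<alpha>\<^sup>2 * Y)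
       + (1 + 1 / (1 / 4)) * \<alpha>\<^sup>2 * (P - q))
    \<le> \<rho> * (c * X + d * Y + E)"
proof -
  have Lp: "L > 0" using m by simp
  have s0: "0 \<le> 50 * L / m" using m by simp
  have N0: "N \<ge> 0" using N real_sqrt_ge_zero[OF s0] by linarith
  have N2: "N\<^sup>2 \<ge> 50 * L / m"
  proof -
    have "(sqrt (50 * L / m))\<^sup>2 \<le> N\<^sup>2" using N real_sqrt_ge_zero[OF s0] by (intro power_mono) auto
    then show ?thesis using s0 by simp
  qed
  have Np: "N > 0"
  proof -
    have "N\<^sup>2 > 0" using N2 m Lp by (smt (verit) divide_pos_pos)
    then show ?thesis using N0 by (cases "N = 0") auto
  qed
  have mN: "m * N\<^sup>2 \<ge> 50 * L" using N2 m by (simp add: field_simps)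
  have r1: "\<rho> \<ge> 1 - 1 / (2 * N)" and r2: "\<rho> \<ge> 1 - m / (20 * L)" unfolding \<rho>_def by auto
  have c0: "c \<ge> 0" and d0: "d \<ge> 0" unfolding c_def d_def using m by auto
  have hX: "c * (X - X / N) + (1 + 1 / 4) / N * ((1 + 1) / N\<^sup>2 * X) \<le> \<rho> * (c * X)"
  proof -
    have "(1 - 1 / (2 * N)) * (c * X) - (c * (X - X / N) + (1 + 1 / 4) / N * ((1 + 1) / N\<^sup>2 * X))
        = X * (m * N\<^sup>2 - 50 * L) / (20 * L * N ^ 3)"
      unfolding c_def using Np Lp by (simp add: field_simps power2_eq_square power3_eq_cube)
    also have "\<dots> \<ge> 0" using X mN Np Lp by simp
    finally have "c * (X - X / N) + (1 + 1 / 4) / N * ((1 + 1) / N\<^sup>2 * X) \<le> (1 - 1 / (2 * N)) * (c * X)" by simp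
    also have "\<dots> \<le> \<rho> * (c * X)" using r1 c0 X by (intro mult_right_mono) auto
    finally show ?thesis .
  qed
  have hY: "d * (Y - Y / N) + (1 + 1 / 4) / N * ((1 + 1 / 1) * \<alpha>\<^sup>2 * Y) \<le> \<rho> * (d * Y)"
  proof -
    have "d * (Y - Y / N) + (1 + 1 / 4) / N * ((1 + 1 / 1) * \<alpha>\<^sup>2 * Y) = (1 - 1 / (2 * N)) * (d * Y)"
      unfolding d_def \<alpha>_def using Np Lp by (simp add: field_simps power2_eq_square)
    also have "\<dots> \<le> \<rho> * (d * Y)" using r1 d0 Y by (intro mult_right_mono) auto
    finally show ?thesis .
  qed
  have key: "40 * m * lam - 16 * q \<le> 25 * m * L * E"
  proof (cases "E = 0")
    case True
    then have "lam\<^sup>2 \<le> 0" using CS by simp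
    then have "lam\<^sup>2 = 0" using zero_le_power2[of lam] by linarith
    then have "lam = 0" by simp
    then show ?thesis using True q by simp
  next
    case False
    then have Ep: "E > 0" using E by simp
    have sq: "0 \<le> (4 * lam - 5 * m * E)\<^sup>2 + 25 * m * (L - m) * E\<^sup>2" using m by simp
    have "E * (40 * m * lam - 16 * q) \<le> 40 * m * lam * E - 16 * lam\<^sup>2"
      using CS by (simp add: algebra_simps)
    also have "\<dots> \<le> E * (25 * m * L * E)" using sq by (simp add: algebra_simps power2_eq_square)
    finally show ?thesis using Ep by simp
  qed
  have hR: "c * E + d * P + (E - 2 * \<alpha> * lam + \<alpha>\<^sup>2 * q + (1 + 1 / (1 / 4)) * \<alpha>\<^sup>2 * (P - q)) \<le> \<rho> * E"
  proof -
    have K: "d + (1 + 1 / (1 / 4)) * \<alpha>\<^sup>2 = 2 / (5 * L\<^sup>2)"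
      unfolding d_def \<alpha>_def using Lp by (simp add: field_simps power2_eq_square)
    have "c * E + d * P + (E - 2 * \<alpha> * lam + \<alpha>\<^sup>2 * q + (1 + 1 / (1 / 4)) * \<alpha>\<^sup>2 * (P - q))
        = c * E + (2 / (5 * L\<^sup>2)) * P + E - 2 * \<alpha> * lam - 4 * \<alpha>\<^sup>2 * q"
      unfolding K[symmetric] by (simp add: algebra_simps)
    also have "\<dots> \<le> c * E + (2 / (5 * L\<^sup>2)) * ((L + m) * lam - m * L * E) + E - 2 * \<alpha> * lam - 4 * \<alpha>\<^sup>2 * q"
    proof -
      have "(2 / (5 * L\<^sup>2)) * P \<le> (2 / (5 * L\<^sup>2)) * ((L + m) * lam - m * L * E)" using P Lp by (intro mult_left_mono) auto
      then show ?thesis by linarith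
    qed
    also have "\<dots> = E - (m / (20 * L)) * E + (40 * m * lam - 16 * q - 25 * m * L * E) / (100 * L\<^sup>2)"
      unfolding c_def \<alpha>_def using Lp by (simp add: field_simps power2_eq_square)
    also have "\<dots> \<le> E - (m / (20 * L)) * E" using key Lp by (simp add: divide_nonpos_pos)
    also have "\<dots> = (1 - m / (20 * L)) * E" by (simp add: algebra_simps)
    also have "\<dots> \<le> \<rho> * E" using r2 E by (intro mult_right_mono) auto
    finally show ?thesis .
  qed
  have "c * (X - X / N + E) + d * (Y - Y / N + P)
       + (E - 2 * \<alpha> * lam + \<alpha>\<^sup>2 * q
       + (1 + 1 / 4) / N * ((1 + 1) / N\<^sup>2 * X + (1 + 1 / 1) * \<alpha>\<^sup>2 * Y)
       + (1 + 1 / (1 / 4)) * \<alpha>\<^sup>2 * (P - q))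
     = (c * (X - X / N) + (1 + 1 / 4) / N * ((1 + 1) / N\<^sup>2 * X))
       + (d * (Y - Y / N) + (1 + 1 / 4) / N * ((1 + 1 / 1) * \<alpha>\<^sup>2 * Y))
       + (c * E + d * P + (E - 2 * \<alpha> * lam + \<alpha>\<^sup>2 * q + (1 + 1 / (1 / 4)) * \<alpha>\<^sup>2 * (P - q)))"
    by (simp add: algebra_simps add_divide_distrib)
  also have "\<dots> \<le> \<rho> * (c * X) + \<rho> * (d * Y) + \<rho> * E"
    using hX hY hR by linarith
  also have "\<dots> = \<rho> * (c * X + d * Y + E)" by (simp add: algebra_simps)
  finally show ?thesis .
qed

lemma arith2:
  fixes N m L X Y E lam q P :: real
  assumes N: "N \<ge> sqrt (64 * L / m)" and m: "0 < m" "m \<le> L"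
    and X: "0 \<le> X" and Y: "0 \<le> Y" and E: "0 \<le> E" and q: "0 \<le> q"
    and lam: "m * E \<le> lam" and P: "P \<le> L * lam"
  defines "c \<equiv> m / (16 * L)" and "d \<equiv> 1 / (16 * L\<^sup>2)" and "\<alpha> \<equiv> 1 / (8 * L)"
    and "\<rho> \<equiv> 1 - min (1 / (3 * N)) (5 * m / (176 * L))"
  shows "c * (X - X / N + E) + d * (Y - Y / N + P)
       + (E - 2 * \<alpha> * lam + \<alpha>\<^sup>2 * q
       + (1 + 1 / 3) / N * ((1 + 1) / N\<^sup>2 * X + (1 + 1 / 1) * \<alpha>\<^sup>2 * Y)
       + (1 + 1 / (1 / 3)) * \<alpha>\<^sup>2 * (P - q))
    \<le> \<rho> * (c * X + d * Y + E)"
proof -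
  have Lp: "L > 0" using m by simp
  have s0: "0 \<le> 64 * L / m" using m by simp
  have N0: "N \<ge> 0" using N real_sqrt_ge_zero[OF s0] by linarith
  have N2: "N\<^sup>2 \<ge> 64 * L / m"
  proof -
    have "(sqrt (64 * L / m))\<^sup>2 \<le> N\<^sup>2" using N real_sqrt_ge_zero[OF s0] by (intro power_mono) auto
    then show ?thesis using s0 by simp
  qed
  have Np: "N > 0"
  proof -
    have "N\<^sup>2 > 0" using N2 m Lp by (smt (verit) divide_pos_pos)
    then show ?thesis using N0 by (cases "N = 0") auto
  qed
  have mN: "m * N\<^sup>2 \<ge> 64 * L" using N2 m by (simp add: field_simps)
  have r1: "\<rho> \<ge> 1 - 1 / (3 * N)" and r2: "\<rho> \<ge> 1 - 5 * m / (176 * L)" unfolding \<rho>_def by auto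
  have c0: "c \<ge> 0" and d0: "d \<ge> 0" unfolding c_def d_def using m by auto
  have hX: "c * (X - X / N) + (1 + 1 / 3) / N * ((1 + 1) / N\<^sup>2 * X) \<le> \<rho> * (c * X)"
  proof -
    have "(1 - 1 / (3 * N)) * (c * X) - (c * (X - X / N) + (1 + 1 / 3) / N * ((1 + 1) / N\<^sup>2 * X))
        = X * (m * N\<^sup>2 - 64 * L) / (24 * L * N ^ 3)"
      unfolding c_def using Np Lp by (simp add: field_simps power2_eq_square power3_eq_cube)
    also have "\<dots> \<ge> 0" using X mN Np Lp by simp
    finally have "c * (X - X / N) + (1 + 1 / 3) / N * ((1 + 1) / N\<^sup>2 * X) \<le> (1 - 1 / (3 * N)) * (c * X)" by simp
    also have "\<dots> \<le> \<rho> * (c * X)" using r1 c0 X by (intro mult_right_mono) auto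
    finally show ?thesis .
  qed
  have hY: "d * (Y - Y / N) + (1 + 1 / 3) / N * ((1 + 1 / 1) * \<alpha>\<^sup>2 * Y) \<le> \<rho> * (d * Y)"
  proof -
    have "d * (Y - Y / N) + (1 + 1 / 3) / N * ((1 + 1 / 1) * \<alpha>\<^sup>2 * Y) = (1 - 1 / (3 * N)) * (d * Y)"
      unfolding d_def \<alpha>_def using Np Lp by (simp add: field_simps power2_eq_square)
    also have "\<dots> \<le> \<rho> * (d * Y)" using r1 d0 Y by (intro mult_right_mono) auto
    finally show ?thesis .
  qed
  have hR: "c * E + d * P + (E - 2 * \<alpha> * lam + \<alpha>\<^sup>2 * q + (1 + 1 / (1 / 3)) * \<alpha>\<^sup>2 * (P - q)) \<le> \<rho> * E"
  proof -
    have K: "d + (1 + 1 / (1 / 3)) * \<alpha>\<^sup>2 = 1 / (8 * L\<^sup>2)"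
      unfolding d_def \<alpha>_def using Lp by (simp add: field_simps power2_eq_square)
    have "c * E + d * P + (E - 2 * \<alpha> * lam + \<alpha>\<^sup>2 * q + (1 + 1 / (1 / 3)) * \<alpha>\<^sup>2 * (P - q))
        = c * E + (1 / (8 * L\<^sup>2)) * P + E - 2 * \<alpha> * lam - 3 * \<alpha>\<^sup>2 * q"
      unfolding K[symmetric] by (simp add: algebra_simps)
    also have "\<dots> \<le> c * E + (1 / (8 * L\<^sup>2)) * (L * lam) + E - 2 * \<alpha> * lam - 3 * \<alpha>\<^sup>2 * q"
    proof -
      have "(1 / (8 * L\<^sup>2)) * P \<le> (1 / (8 * L\<^sup>2)) * (L * lam)" using P Lp by (intro mult_left_mono) auto
      then show ?thesis by linarith
    qed
    also have "\<dots> = c * E + E - lam / (8 * L) - 3 * \<alpha>\<^sup>2 * q"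
      unfolding \<alpha>_def using Lp by (simp add: field_simps power2_eq_square)
    also have "\<dots> \<le> c * E + E - (m * E) / (8 * L)"
    proof -
      have "m * E / (8 * L) \<le> lam / (8 * L)" using lam Lp by (simp add: divide_right_mono)
      moreover have "0 \<le> 3 * \<alpha>\<^sup>2 * q" using q by simp
      ultimately show ?thesis by linarith
    qed
    also have "\<dots> = (1 - m / (16 * L)) * E" unfolding c_def using Lp by (simp add: field_simps)
    also have "\<dots> \<le> (1 - 5 * m / (176 * L)) * E" using E m Lp by (intro mult_right_mono) (auto simp: field_simps)
    also have "\<dots> \<le> \<rho> * E" using r2 E by (intro mult_right_mono) auto
    finally show ?thesis .
  qed
  have "c * (X - X / N + E) + d * (Y - Y / N + P)
       + (E - 2 * \<alpha> * lam + \<alpha>\<^sup>2 * q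
       + (1 + 1 / 3) / N * ((1 + 1) / N\<^sup>2 * X + (1 + 1 / 1) * \<alpha>\<^sup>2 * Y)
       + (1 + 1 / (1 / 3)) * \<alpha>\<^sup>2 * (P - q))
     = (c * (X - X / N) + (1 + 1 / 3) / N * ((1 + 1) / N\<^sup>2 * X))
       + (d * (Y - Y / N) + (1 + 1 / 3) / N * ((1 + 1 / 1) * \<alpha>\<^sup>2 * Y))
       + (c * E + d * P + (E - 2 * \<alpha> * lam + \<alpha>\<^sup>2 * q + (1 + 1 / (1 / 3)) * \<alpha>\<^sup>2 * (P - q)))"
    by (simp add: algebra_simps add_divide_distrib)
  also have "\<dots> \<le> \<rho> * (c * X) + \<rho> * (d * Y) + \<rho> * E"
    using hX hY hR by linarith
  also have "\<dots> = \<rho> * (c * X + d * Y + E)" by (simp add: algebra_simps)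
  finally show ?thesis .
qed



lemma lam_ge:
  fixes E q lam m L :: real
  assumes E: "0 \<le> E" and CS: "lam\<^sup>2 \<le> E * q" and m: "0 < m" "m \<le> L"
    and S: "m * L * E + q \<le> (L + m) * lam"
  shows "m * E \<le> lam"
proof (rule ccontr)
  assume "\<not> m * E \<le> lam"
  then have a: "lam - m * E < 0" by simp
  have "m * E \<le> L * E" using m E by (intro mult_right_mono) auto
  then have b: "lam - L * E < 0" using a by simp
  have "0 < (lam - m * E) * (lam - L * E)" using a b by (simp add: mult_neg_neg)
  moreover have "E * (m * L * E + q) \<le> E * ((L + m) * lam)" using S E by (intro mult_left_mono) auto
  then have "(lam - m * E) * (lam - L * E) \<le> lam\<^sup>2 - E * q"
    by (simp add: algebra_simps power2_eq_square)
  ultimately show False using CS by linarith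
qed

lemma avg_bound:
  fixes A B :: "nat \<Rightarrow> real"
  assumes n: "0 < n" and h: "\<And>i. i < n \<Longrightarrow> A i \<le> K * B i + C"
  shows "(1 / real n) * (\<Sum>i<n. A i) \<le> K * ((1 / real n) * (\<Sum>i<n. B i)) + C"
proof -
  have "(\<Sum>i<n. A i) \<le> (\<Sum>i<n. K * B i + C)" using h by (intro sum_mono) auto
  also have "\<dots> = K * (\<Sum>i<n. B i) + real n * C" by (simp add: sum.distrib sum_distrib_left)
  finally have "(1 / real n) * (\<Sum>i<n. A i) \<le> (1 / real n) * (K * (\<Sum>i<n. B i) + real n * C)"
    using n by (intro mult_left_mono) auto
  also have "\<dots> = K * ((1 / real n) * (\<Sum>i<n. B i)) + C" using n by (simp add: field_simps)
  finally show ?thesis .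
qed

lemma avg_inner:
  fixes g :: "nat \<Rightarrow> 'a::real_inner"
  shows "(1 / real n) * (\<Sum>i<n. inner (g i) e) = inner e ((1 / real n) *\<^sub>R (\<Sum>i<n. g i))"
  by (simp add: inner_sum_left inner_commute sum_distrib_left inner_sum_right sum_divide_distrib)

lemma final_form:
  fixes G :: "nat \<Rightarrow> 'a \<Rightarrow> 'a::euclidean_space"
  assumes n: "0 < n" and rho: "0 \<le> \<rho>" and d: "0 \<le> d"
    and dec: "\<forall>st. (1 / real n) * (\<Sum>i<n. Vf c d n \<alpha> G xs (finito_step n \<alpha> G st i)) \<le> \<rho> * Vf c d n \<alpha> G xs st"
  shows "\<forall>k. finito_E n \<alpha> G x0 y0 k (\<lambda>st. c * (\<Sum>i<n. (norm (fst st i - xs))\<^sup>2) + (norm (vbar n \<alpha> st - xs))\<^sup>2)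
     \<le> \<rho> ^ k * (c * (\<Sum>i<n. (norm (x0 i - xs))\<^sup>2) + d * (\<Sum>i<n. (norm (y0 i - G i xs))\<^sup>2) + (norm (vbar n \<alpha> (x0, y0) - xs))\<^sup>2)"
proof
  fix k
  have PV: "\<forall>st. c * (\<Sum>i<n. (norm (fst st i - xs))\<^sup>2) + (norm (vbar n \<alpha> st - xs))\<^sup>2 \<le> Vf c d n \<alpha> G xs st"
    unfolding Vf_def using d by (simp add: sum_nonneg)
  show "finito_E n \<alpha> G x0 y0 k (\<lambda>st. c * (\<Sum>i<n. (norm (fst st i - xs))\<^sup>2) + (norm (vbar n \<alpha> st - xs))\<^sup>2)
     \<le> \<rho> ^ k * (c * (\<Sum>i<n. (norm (x0 i - xs))\<^sup>2) + d * (\<Sum>i<n. (norm (y0 i - G i xs))\<^sup>2) + (norm (vbar n \<alpha> (x0, y0) - xs))\<^sup>2)"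
    using E_bound[OF n rho PV dec, of x0 y0 k] unfolding Vf_def by simp
qed

theorem corollary2:
  fixes f :: "nat \<Rightarrow> 'a::euclidean_space \<Rightarrow> real"
    and G :: "nat \<Rightarrow> 'a \<Rightarrow> 'a"
    and n :: nat and m L :: real and xs :: 'a
    and x0 y0 :: "nat \<Rightarrow> 'a"
  assumes m_pos: "0 < m" and mL: "m \<le> L"
    and C1: "\<forall>i<n. C1_grad (f i) (G i)"
    and S: "in_S m L (\<lambda>x. (1 / real n) * (\<Sum>i<n. f i x)) (\<lambda>x. (1 / real n) *\<^sub>R (\<Sum>i<n. G i x))"
    and xs: "(1 / real n) *\<^sub>R (\<Sum>i<n. G i xs) = 0"
  shows
   "((\<forall>i<n. in_F m L (f i) (G i)) \<and> real n \<ge> sqrt (50 * L / m) \<longrightarrow>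
      (\<forall>k. finito_E n (1 / (5 * L)) G x0 y0 k
              (\<lambda>st. m / (10 * L) * (\<Sum>i<n. (norm (fst st i - xs))\<^sup>2)
                    + (norm (vbar n (1 / (5 * L)) st - xs))\<^sup>2)
          \<le> (1 - min (1 / (2 * real n)) (m / (20 * L))) ^ k *
             (m / (10 * L) * (\<Sum>i<n. (norm (x0 i - xs))\<^sup>2)
              + 1 / (5 * L\<^sup>2) * (\<Sum>i<n. (norm (y0 i - G i xs))\<^sup>2)
              + (norm (vbar n (1 / (5 * L)) (x0, y0) - xs))\<^sup>2)))
  \<and> ((\<forall>i<n. in_F 0 L (f i) (G i)) \<and> real n \<ge> sqrt (64 * L / m) \<longrightarrow>
      (\<forall>k. finito_E n (1 / (8 * L)) G x0 y0 k
              (\<lambda>st. m / (16 * L) * (\<Sum>i<n. (norm (fst st i - xs))\<^sup>2)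
                    + (norm (vbar n (1 / (8 * L)) st - xs))\<^sup>2)
          \<le> (1 - min (1 / (3 * real n)) (5 * m / (176 * L))) ^ k *
             (m / (16 * L) * (\<Sum>i<n. (norm (x0 i - xs))\<^sup>2)
              + 1 / (16 * L\<^sup>2) * (\<Sum>i<n. (norm (y0 i - G i xs))\<^sup>2)
              + (norm (vbar n (1 / (8 * L)) (x0, y0) - xs))\<^sup>2)))
  \<and> ((\<forall>i<n. L_smooth L (f i) (G i)) \<and> real n \<ge> 48 * L\<^sup>2 / m\<^sup>2 \<longrightarrow>
      (\<forall>k. finito_E n (1 / (2 * real n * m)) G x0 y0 k
              (\<lambda>st. 3 / (8 * real n) * (\<Sum>i<n. (norm (fst st i - xs))\<^sup>2)
                    + (norm (vbar n (1 / (2 * real n * m)) st - xs))\<^sup>2)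
          \<le> (1 - 1 / (3 * real n)) ^ k *
             (3 / (8 * real n) * (\<Sum>i<n. (norm (x0 i - xs))\<^sup>2)
              + 1 / (real n ^ 2 * m\<^sup>2) * (\<Sum>i<n. (norm (y0 i - G i xs))\<^sup>2)
              + (norm (vbar n (1 / (2 * real n * m)) (x0, y0) - xs))\<^sup>2)))"
proof -
  have Lp: "0 < L" using m_pos mL by simp
  define gS where "gS x = (1 / real n) *\<^sub>R (\<Sum>i<n. G i x)" for x
  obtain xs' where xs': "gS xs' = 0"
      and ineq: "\<And>x. - 2 * m * L * (norm (x - xs'))\<^sup>2 + 2 * (L + m) * inner (x - xs') (gS x) - 2 * (norm (gS x))\<^sup>2 \<ge> 0"
    using S unfolding in_S_def gS_def by blast
  have n: "0 < n"
  proof (rule ccontr)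
    assume "\<not> 0 < n"
    then have n0: "n = 0" by simp
    obtain b :: 'a where b: "b \<in> Basis" using nonempty_Basis by blast
    have "- 2 * m * L * (norm (xs' + b - xs'))\<^sup>2 + 2 * (L + m) * inner (xs' + b - xs') (gS (xs' + b)) - 2 * (norm (gS (xs' + b)))\<^sup>2 \<ge> 0"
      by (rule ineq)
    then have "- 2 * m * L \<ge> 0" using b unfolding gS_def n0 by simp
    then show False using m_pos Lp by (simp add: mult_pos_pos) (smt (verit) mult_pos_pos)
  qed
  have G0: "(\<Sum>i<n. G i xs) = 0" using xs n by simp
  have xs_eq: "xs' = xs"
  proof -
    have "- 2 * m * L * (norm (xs - xs'))\<^sup>2 + 2 * (L + m) * inner (xs - xs') (gS xs) - 2 * (norm (gS xs))\<^sup>2 \<ge> 0"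
      by (rule ineq)
    then have "m * L * (norm (xs - xs'))\<^sup>2 \<le> 0" using xs unfolding gS_def by (simp add: mult_ac)
    moreover have "m * L > 0" using m_pos Lp by simp
    ultimately have "(norm (xs - xs'))\<^sup>2 \<le> 0"
      by (metis linorder_not_le mult_pos_pos)
    then show ?thesis by simp
  qed
  have Sv: "m * L * (norm (v - xs))\<^sup>2 + (norm (gS v))\<^sup>2 \<le> (L + m) * inner (v - xs) (gS v)" for v
    using ineq[of v] unfolding xs_eq by (simp add: algebra_simps)
  have CS: "(inner (v - xs) (gS v))\<^sup>2 \<le> (norm (v - xs))\<^sup>2 * (norm (gS v))\<^sup>2" for v
    by (metis Cauchy_Schwarz_ineq power2_norm_eq_inner)
  have LG: "m * (norm (v - xs))\<^sup>2 \<le> inner (v - xs) (gS v)" for v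
    by (rule lam_ge[OF _ CS[of v] m_pos mL Sv]) simp
  have Xn: "0 \<le> (\<Sum>j<n. (norm (x j - xs))\<^sup>2)" for x :: "nat \<Rightarrow> 'a" by (simp add: sum_nonneg)
  have Yn: "0 \<le> (\<Sum>j<n. (norm (y j - G j xs))\<^sup>2)" for y :: "nat \<Rightarrow> 'a" by (simp add: sum_nonneg)
  have En: "0 \<le> (norm (v - xs))\<^sup>2" for v :: 'a by simp
  have qn: "0 \<le> (norm (gS v))\<^sup>2" for v by simp
  have sumdiff: "(\<Sum>i<n. G i v - G i xs) = (\<Sum>i<n. G i v)" for v
    by (simp add: sum_subtractf G0)
  have avgI: "(1 / real n) * (\<Sum>i<n. inner (G i v - G i xs) (v - xs)) = inner (v - xs) (gS v)" for v
    unfolding avg_inner sumdiff gS_def ..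
  have Vfeq: "Vf c d n \<alpha> G xs (x, y) = c * (\<Sum>j<n. (norm (x j - xs))\<^sup>2) + d * (\<Sum>j<n. (norm (y j - G j xs))\<^sup>2)
      + (norm (vbar n \<alpha> (x, y) - xs))\<^sup>2" for c d \<alpha> x y
    unfolding Vf_def by simp
  have dec1: "\<forall>st. (1 / real n) * (\<Sum>i<n. Vf (m / (10 * L)) (1 / (5 * L\<^sup>2)) n (1 / (5 * L)) G xs (finito_step n (1 / (5 * L)) G st i))
          \<le> (1 - min (1 / (2 * real n)) (m / (20 * L))) * Vf (m / (10 * L)) (1 / (5 * L\<^sup>2)) n (1 / (5 * L)) G xs st"
    if H: "(\<forall>i<n. in_F m L (f i) (G i)) \<and> real n \<ge> sqrt (50 * L / m)"
      proof
        fix st :: "(nat \<Rightarrow> 'a) \<times> (nat \<Rightarrow> 'a)"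
        obtain x y where st: "st = (x, y)" by fastforce
        define v where "v = vbar n (1 / (5 * L)) (x, y)"
        have t1: "0 < (1 / 4 :: real)" by simp
        have s1: "0 < (1 :: real)" by simp
        note os = onestep[where G = G and xs = xs and x = x and y = y and \<alpha> = "1 / (5 * L)"
           and c = "m / (10 * L)" and d = "1 / (5 * L\<^sup>2)", OF n G0 t1 s1]
        have Pb: "(1 / real n) * (\<Sum>i<n. (norm (G i v - G i xs))\<^sup>2)
            \<le> (L + m) * inner (v - xs) (gS v) - m * L * (norm (v - xs))\<^sup>2"
        proof -
          have "(1 / real n) * (\<Sum>i<n. (norm (G i v - G i xs))\<^sup>2)
             \<le> (L + m) * ((1 / real n) * (\<Sum>i<n. inner (G i v - G i xs) (v - xs))) + (- (m * L * (norm (v - xs))\<^sup>2))"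
            using interp[of m L "f _" "G _"] H m_pos mL by (intro avg_bound[OF n]) auto
          then show ?thesis unfolding avgI by simp
        qed
        have CSv: "(inner (v - xs) (gS v))\<^sup>2 \<le> (norm (v - xs))\<^sup>2 * (norm (gS v))\<^sup>2" by (rule CS)
        note ar = arith1[OF conjunct2[OF H] m_pos mL Xn[of x] Yn[of y] En[of v] qn[of v] CSv Pb]
        show "(1 / real n) * (\<Sum>i<n. Vf (m / (10 * L)) (1 / (5 * L\<^sup>2)) n (1 / (5 * L)) G xs (finito_step n (1 / (5 * L)) G st i))
          \<le> (1 - min (1 / (2 * real n)) (m / (20 * L))) * Vf (m / (10 * L)) (1 / (5 * L\<^sup>2)) n (1 / (5 * L)) G xs st"
          unfolding st Vfeq using order_trans[OF os ar[unfolded gS_def v_def]] by simp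
      qed
  have r1: "0 \<le> 1 - min (1 / (2 * real n)) (m / (20 * L))"
  proof -
    have "1 / (2 * real n) \<le> 1" using n by (simp add: field_simps)
    then show ?thesis using min.cobounded1[of "1 / (2 * real n)" "m / (20 * L)"] by linarith
  qed
  have d1: "0 \<le> 1 / (5 * L\<^sup>2)" using Lp by simp
  note part1 = final_form[OF n r1 d1 dec1]
  have dec2: "\<forall>st. (1 / real n) * (\<Sum>i<n. Vf (m / (16 * L)) (1 / (16 * L\<^sup>2)) n (1 / (8 * L)) G xs (finito_step n (1 / (8 * L)) G st i))
          \<le> (1 - min (1 / (3 * real n)) (5 * m / (176 * L))) * Vf (m / (16 * L)) (1 / (16 * L\<^sup>2)) n (1 / (8 * L)) G xs st"
    if H: "(\<forall>i<n. in_F 0 L (f i) (G i)) \<and> real n \<ge> sqrt (64 * L / m)"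
      proof
        fix st :: "(nat \<Rightarrow> 'a) \<times> (nat \<Rightarrow> 'a)"
        obtain x y where st: "st = (x, y)" by fastforce
        define v where "v = vbar n (1 / (8 * L)) (x, y)"
        have t2: "0 < (1 / 3 :: real)" by simp
        have s1: "0 < (1 :: real)" by simp
        note os = onestep[where G = G and xs = xs and x = x and y = y and \<alpha> = "1 / (8 * L)"
           and c = "m / (16 * L)" and d = "1 / (16 * L\<^sup>2)", OF n G0 t2 s1]
        have Pb: "(1 / real n) * (\<Sum>i<n. (norm (G i v - G i xs))\<^sup>2)
            \<le> L * inner (v - xs) (gS v)"
        proof -
          have "(1 / real n) * (\<Sum>i<n. (norm (G i v - G i xs))\<^sup>2)
             \<le> L * ((1 / real n) * (\<Sum>i<n. inner (G i v - G i xs) (v - xs))) + 0"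
            using interp[of 0 L "f _" "G _"] H Lp by (intro avg_bound[OF n]) auto
          then show ?thesis unfolding avgI by simp
        qed
        note ar = arith2[OF conjunct2[OF H] m_pos mL Xn[of x] Yn[of y] En[of v] qn[of v] LG[of v] Pb]
        show "(1 / real n) * (\<Sum>i<n. Vf (m / (16 * L)) (1 / (16 * L\<^sup>2)) n (1 / (8 * L)) G xs (finito_step n (1 / (8 * L)) G st i))
          \<le> (1 - min (1 / (3 * real n)) (5 * m / (176 * L))) * Vf (m / (16 * L)) (1 / (16 * L\<^sup>2)) n (1 / (8 * L)) G xs st"
          unfolding st Vfeq using order_trans[OF os ar[unfolded gS_def v_def]] by simp
      qed
  have r2: "0 \<le> 1 - min (1 / (3 * real n)) (5 * m / (176 * L))"
  proof -
    have "1 / (3 * real n) \<le> 1" using n by (simp add: field_simps)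
    then show ?thesis using min.cobounded1[of "1 / (3 * real n)" "5 * m / (176 * L)"] by linarith
  qed
  have d2: "0 \<le> 1 / (16 * L\<^sup>2)" using Lp by simp
  note part2 = final_form[OF n r2 d2 dec2]
  have dec3: "\<forall>st. (1 / real n) * (\<Sum>i<n. Vf (3 / (8 * real n)) (1 / (real n ^ 2 * m\<^sup>2)) n (1 / (2 * real n * m)) G xs (finito_step n (1 / (2 * real n * m)) G st i))
          \<le> (1 - 1 / (3 * real n)) * Vf (3 / (8 * real n)) (1 / (real n ^ 2 * m\<^sup>2)) n (1 / (2 * real n * m)) G xs st"
    if H: "(\<forall>i<n. L_smooth L (f i) (G i)) \<and> real n \<ge> 48 * L\<^sup>2 / m\<^sup>2"
      proof
        fix st :: "(nat \<Rightarrow> 'a) \<times> (nat \<Rightarrow> 'a)"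
        obtain x y where st: "st = (x, y)" by fastforce
        define v where "v = vbar n (1 / (2 * real n * m)) (x, y)"
        have t1: "0 < (1 :: real)" by simp
        have s1: "0 < (3 :: real)" by simp
        note os = onestep[where G = G and xs = xs and x = x and y = y and \<alpha> = "1 / (2 * real n * m)"
           and c = "3 / (8 * real n)" and d = "1 / (real n ^ 2 * m\<^sup>2)", OF n G0 t1 s1]
        have Pb: "(1 / real n) * (\<Sum>i<n. (norm (G i v - G i xs))\<^sup>2)
            \<le> L\<^sup>2 * (norm (v - xs))\<^sup>2"
        proof -
          have "(1 / real n) * (\<Sum>i<n. (norm (G i v - G i xs))\<^sup>2)
             \<le> 0 * ((1 / real n) * (\<Sum>i<n. (0::real))) + L\<^sup>2 * (norm (v - xs))\<^sup>2"
          proof (rule avg_bound[OF n])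
            fix i assume i: "i < n"
            have "norm (G i v - G i xs) \<le> L * norm (v - xs)" using H i unfolding L_smooth_def by blast
            then have "(norm (G i v - G i xs))\<^sup>2 \<le> (L * norm (v - xs))\<^sup>2" by (intro power_mono) auto
            then show "(norm (G i v - G i xs))\<^sup>2 \<le> 0 * 0 + L\<^sup>2 * (norm (v - xs))\<^sup>2" by (simp add: power_mult_distrib)
          qed
          then show ?thesis by simp
        qed
        note ar = arith3[OF conjunct2[OF H] m_pos mL Xn[of x] Yn[of y] En[of v] qn[of v] LG[of v] Pb]
        show "(1 / real n) * (\<Sum>i<n. Vf (3 / (8 * real n)) (1 / (real n ^ 2 * m\<^sup>2)) n (1 / (2 * real n * m)) G xs (finito_step n (1 / (2 * real n * m)) G st i))
          \<le> (1 - 1 / (3 * real n)) * Vf (3 / (8 * real n)) (1 / (real n ^ 2 * m\<^sup>2)) n (1 / (2 * real n * m)) G xs st"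
          unfolding st Vfeq using order_trans[OF os ar[unfolded gS_def v_def]] by simp
      qed
  have r3: "0 \<le> 1 - 1 / (3 * real n)" using n by (simp add: field_simps)
  have d3: "0 \<le> 1 / (real n ^ 2 * m\<^sup>2)" by simp
  note part3 = final_form[OF n r3 d3 dec3]
  show ?thesis using part1 part2 part3 by blast
qed

end
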